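(* Let $M_i=(E,r_i)$, $1\le i\le m$, be demi-matroids on the same finite ground set $E$ with $r_m(X)\le\cdots\le r_2(X)\le r_1(X)$ for all $X\subseteq E$ (a flag). If $\mathcal{E}_{M_1}\subseteq\mathcal{E}_{M_2}\subseteq\cdots\subseteq\mathcal{E}_{M_m}$, then $(E,\rho)$ with $\rho(X)=\sum_{i=1}^m(-1)^{i+1}r_i(X)$ is a demi-matroid.
   Context: A demi-matroid is a pair $(E,r)$ with $E$ a finite set and $r:2^E\to\mathbb{N}$ satisfying (R1) $r(\emptyset)=0$ and (R2) for every $X\subseteq E$ and $x\in E$, $r(X)\le r(X\cup\{x\})\le r(X)+1$. (Matroids are special demi-matroids.) For a demi-matroid $M=(E,r)$, $\mathcal{E}_M=\{(X,x): X\subseteq E,\ x\in X,\ r(X\setminus\{x\})=r(X)\}$. *)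

theory Defs
  imports Main
begin

definition demi_matroid :: "'a set \<Rightarrow> ('a set \<Rightarrow> nat) \<Rightarrow> bool" where
  "demi_matroid E r \<longleftrightarrow> finite E \<and> r {} = 0 \<and>
     (\<forall>X x. X \<subseteq> E \<and> x \<in> E \<longrightarrow> r X \<le> r (insert x X) \<and> r (insert x X) \<le> r X + 1)"

definition calE :: "'a set \<Rightarrow> ('a set \<Rightarrow> nat) \<Rightarrow> ('a set \<times> 'a) set" where
  "calE E r = {(X, x). X \<subseteq> E \<and> x \<in> X \<and> r (X - {x}) = r X}"

end

theory Submission
  imports Defs
begin

lemma alt_aux:
  fixes a :: "nat \<Rightarrow> int"
  assumes "\<forall>i. 1\<le>i \<and> i<m \<longrightarrow> a (i+1) \<le> a i" "\<forall>i. 1\<le>i \<and> i\<le>m \<longrightarrow> 0 \<le> a i"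
  shows "(even m \<longrightarrow> 0 \<le> (\<Sum>i=1..m. (-1)^(i+1) * a i) \<and> (m > 0 \<longrightarrow> (\<Sum>i=1..m. (-1)^(i+1) * a i) \<le> a 1 - a m))
       \<and> (odd m \<longrightarrow> a m \<le> (\<Sum>i=1..m. (-1)^(i+1) * a i) \<and> (\<Sum>i=1..m. (-1)^(i+1) * a i) \<le> a 1)"
  using assms
proof (induction m)
  case 0
  then show ?case by simp
next
  case (Suc m)
  have IH: "(even m \<longrightarrow> 0 \<le> (\<Sum>i=1..m. (-1)^(i+1) * a i) \<and> (m > 0 \<longrightarrow> (\<Sum>i=1..m. (-1)^(i+1) * a i) \<le> a 1 - a m))
       \<and> (odd m \<longrightarrow> a m \<le> (\<Sum>i=1..m. (-1)^(i+1) * a i) \<and> (\<Sum>i=1..m. (-1)^(i+1) * a i) \<le> a 1)"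
    using Suc by simp
  have s: "(\<Sum>i=1..Suc m. (-1)^(i+1) * a i) = (\<Sum>i=1..m. (-1)^(i+1) * a i) + (-1)^(m+2) * a (Suc m)"
    by simp
  have anti: "m > 0 \<Longrightarrow> a (Suc m) \<le> a m" using Suc.prems(1)[rule_format, of m] by simp
  have nn: "0 \<le> a (Suc m)" using Suc.prems(2) by simp
  show ?case
  proof (cases "even m")
    case True
    then have "(-1::int)^(m+2) = 1" by simp
    moreover have "m = 0 \<Longrightarrow> ?thesis" by simp
    ultimately show ?thesis using IH True s anti nn by (cases "m = 0") auto
  next
    case False
    then have "(-1::int)^(m+2) = -1" by simp
    then show ?thesis using IH False s anti nn by (auto simp: odd_pos)
  qed
qed

lemma alt:
  fixes a :: "nat \<Rightarrow> int"
  assumes "\<forall>i. 1\<le>i \<and> i<m \<longrightarrow> a (i+1) \<le> a i" "\<forall>i. 1\<le>i \<and> i\<le>m \<longrightarrow> 0 \<le> a i"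
  shows "0 \<le> (\<Sum>i=1..m. (-1)^(i+1) * a i)"
    and "m > 0 \<Longrightarrow> (\<Sum>i=1..m. (-1)^(i+1) * a i) \<le> a 1"
proof -
  have "0 \<le> a m" if "m > 0" using assms(2) that by auto
  then show "0 \<le> (\<Sum>i=1..m. (-1)^(i+1) * a i)"
    using alt_aux[OF assms] by (cases "even m") (auto simp: odd_pos)
  show "(\<Sum>i=1..m. (-1)^(i+1) * a i) \<le> a 1" if "m > 0"
    using alt_aux[OF assms] \<open>m > 0 \<Longrightarrow> 0 \<le> a m\<close> that by (cases "even m") auto
qed

theorem mainTheorem2:
  fixes E :: "'a set" and r :: "nat \<Rightarrow> 'a set \<Rightarrow> nat" and m :: nat
  assumes "finite E"
    and dm: "\<forall>i\<in>{1..m}. demi_matroid E (r i)"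
    and flag: "\<forall>i\<in>{1..<m}. \<forall>X. X \<subseteq> E \<longrightarrow> r (i + 1) X \<le> r i X"
    and chain: "\<forall>i\<in>{1..<m}. calE E (r i) \<subseteq> calE E (r (i + 1))"
  shows "\<exists>\<rho> :: 'a set \<Rightarrow> nat.
           (\<forall>X. X \<subseteq> E \<longrightarrow> int (\<rho> X) = (\<Sum>i=1..m. (-1) ^ (i + 1) * int (r i X)))
           \<and> demi_matroid E \<rho>"
proof -
  define S where "S X = (\<Sum>i=1..m. (-1) ^ (i + 1) * int (r i X))" for X
  have Snn: "0 \<le> S X" if "X \<subseteq> E" for X
    unfolding S_def by (rule alt(1)) (use flag that in auto)
  define \<rho> where "\<rho> X = nat (S X)" for X
  have rhoS: "int (\<rho> X) = S X" if "X \<subseteq> E" for X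
    using Snn[OF that] by (simp add: \<rho>_def)
  have r0: "r i {} = 0" if "i \<in> {1..m}" for i
    using dm that by (auto simp: demi_matroid_def)
  have step: "r i X \<le> r i (insert x X) \<and> r i (insert x X) \<le> r i X + 1"
    if "i \<in> {1..m}" "X \<subseteq> E" "x \<in> E" for i X x
    using dm that by (auto simp: demi_matroid_def)
  have key: "0 \<le> S (insert x X) - S X \<and> S (insert x X) - S X \<le> 1" if X: "X \<subseteq> E" and x: "x \<in> E" for X x
  proof (cases "x \<in> X")
    case True
    then show ?thesis by (simp add: insert_absorb)
  next
    case False
    define d where "d i = int (r i (insert x X)) - int (r i X)" for i
    have diff: "S (insert x X) - S X = (\<Sum>i=1..m. (-1) ^ (i + 1) * d i)"
      unfolding S_def d_def by (simp add: sum_subtractf[symmetric] algebra_simps)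
    have d01: "0 \<le> d i \<and> d i \<le> 1" if "i \<in> {1..m}" for i
      using step[OF that X x] by (simp add: d_def)
    have anti: "d (i+1) \<le> d i" if "1 \<le> i" "i < m" for i
    proof (cases "d i = 0")
      case True
      then have "(insert x X, x) \<in> calE E (r i)"
        using X x False by (auto simp: calE_def d_def)
      then have "(insert x X, x) \<in> calE E (r (i+1))" using chain that by auto
      then have "d (i+1) = 0" using False by (auto simp: calE_def d_def)
      then show ?thesis using True by simp
    next
      case False
      then have "d i = 1" using d01[of i] that by auto
      moreover have "d (i+1) \<le> 1" using d01[of "i+1"] that by auto
      ultimately show ?thesis by simp
    qed
    have "0 \<le> (\<Sum>i=1..m. (-1) ^ (i + 1) * d i)"
      by (rule alt(1)) (use anti d01 in auto)
    moreover have "(\<Sum>i=1..m. (-1) ^ (i + 1) * d i) \<le> 1"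
    proof (cases "m = 0")
      case True then show ?thesis by simp
    next
      case False
      have "(\<Sum>i=1..m. (-1) ^ (i + 1) * d i) \<le> d 1"
        by (rule alt(2)) (use anti d01 False in auto)
      also have "\<dots> \<le> 1" using d01[of 1] False by auto
      finally show ?thesis .
    qed
    ultimately show ?thesis using diff by simp
  qed
  have "demi_matroid E \<rho>"
    unfolding demi_matroid_def
  proof (intro conjI allI impI)
    show "finite E" by fact
    have "S {} = 0" unfolding S_def using r0 by simp
    then show "\<rho> {} = 0" by (simp add: \<rho>_def)
  next
    fix X x assume a: "X \<subseteq> E \<and> x \<in> E"
    then have i: "insert x X \<subseteq> E" by auto
    show "\<rho> X \<le> \<rho> (insert x X)" using key[of X x] a rhoS[of X] rhoS[OF i] by linarith
    show "\<rho> (insert x X) \<le> \<rho> X + 1" using key[of X x] a rhoS[of X] rhoS[OF i] by linarith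
  qed
  then show ?thesis using rhoS unfolding S_def by blast
qed

end
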